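(* Let $(A,d)$ and $(A',d')$ be unital dg-algebras over $\mathbb{R}$, let $l\ge 2$, and let $f_i\in \mathrm{Hom}^0(A[1]^{\otimes i},A'[1])$, $i=1,\dots,l-1$, be linear maps such that $f_1$ is unital, i.e. $f_1(1)=1$, and $f_2,\dots,f_{l-1}$ are normal. Define the multilinear map $\Psi_l[f_1,\dots,f_{l-1}]: A[1]^{\otimes l}\to A'[1]$ by $$\Psi_l[f_1,\ldots,f_{l-1}](a_1,\ldots,a_l)=\sum_{i=1}^{l-1}(-1)^{\bar a_1+\cdots+\bar a_i}f_{l-1}(a_1,\ldots,a_ia_{i+1},\ldots,a_l)-\sum_{i=1}^{l-1}(-1)^{\bar a_1+\cdots+\bar a_i}f_i(a_1,\ldots,a_i)\,f_{l-i}(a_{i+1},\ldots,a_l)$$ for homogeneous $a_1,\dots,a_l$, where products are taken in $A$ resp. $A'$. Then $\Psi_l[f_1,\dots,f_{l-1}]$ is normal.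
   Context: For a graded vector space $A=\bigoplus A_n$, the shifted space $A[1]$ has $A[1]_n=A_{n+1}$; for homogeneous $a$ one writes $\bar a=\deg a-1$ for its degree in $A[1]$, where $\deg a$ is its degree in $A$. $\mathrm{Hom}^0$ denotes degree-preserving linear maps. A multilinear map $f: A[1]^{\otimes l}\to A'[1]$ is called normal if $f(a_1,\dots,a_l)=0$ whenever some argument $a_i$ equals the unit $1\in A$. *)

theory Defs
  imports Complex_Main
begin

definition graded_vs :: "(int \<Rightarrow> 'a::real_vector set) \<Rightarrow> bool" where
  "graded_vs G \<longleftrightarrow> (\<forall>n. subspace (G n)) \<and>
     (\<forall>x. \<exists>!c. finite {n. c n \<noteq> 0} \<and> (\<forall>n. c n \<in> G n) \<and> x = (\<Sum>n\<in>{n. c n \<noteq> 0}. c n))"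

definition unital_dg_algebra :: "(int \<Rightarrow> 'a::real_algebra_1 set) \<Rightarrow> ('a \<Rightarrow> 'a) \<Rightarrow> bool" where
  "unital_dg_algebra G d \<longleftrightarrow> graded_vs G \<and> 1 \<in> G 0 \<and>
     (\<forall>m n x y. x \<in> G m \<longrightarrow> y \<in> G n \<longrightarrow> x * y \<in> G (m + n)) \<and>
     linear d \<and> (\<forall>n x. x \<in> G n \<longrightarrow> d x \<in> G (n + 1)) \<and> (\<forall>x. d (d x) = 0) \<and>
     (\<forall>n x y. x \<in> G n \<longrightarrow> d (x * y) = d x * y + (if even n then 1 else -1) *\<^sub>R (x * d y))"

definition multilinear :: "nat \<Rightarrow> ('a::real_vector list \<Rightarrow> 'b::real_vector) \<Rightarrow> bool" where
  "multilinear i f \<longleftrightarrow> (\<forall>as k. length as = i \<longrightarrow> k < i \<longrightarrow> linear (\<lambda>x. f (as[k := x])))"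

text \<open>Elements of Hom^0(A[1]^{\<otimes>i}, A'[1]): multilinear and of degree 0 for the shifted
  grading (an element of A_n has degree n - 1 in A[1]).\<close>
definition hom0_shift :: "(int \<Rightarrow> 'a::real_vector set) \<Rightarrow> (int \<Rightarrow> 'b::real_vector set) \<Rightarrow> nat
    \<Rightarrow> ('a list \<Rightarrow> 'b) \<Rightarrow> bool" where
  "hom0_shift G G' i f \<longleftrightarrow> multilinear i f \<and>
     (\<forall>as ns. length as = i \<longrightarrow> length ns = i \<longrightarrow> (\<forall>k<i. as ! k \<in> G (ns ! k)) \<longrightarrow>
        f as \<in> G' (sum_list (map (\<lambda>n. n - 1) ns) + 1))"

definition normal_map :: "nat \<Rightarrow> ('a::real_algebra_1 list \<Rightarrow> 'b::zero) \<Rightarrow> bool" where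
  "normal_map i f \<longleftrightarrow> (\<forall>as. length as = i \<longrightarrow> 1 \<in> set as \<longrightarrow> f as = 0)"

definition sgn_pow :: "int \<Rightarrow> real" where
  "sgn_pow k = (if even k then 1 else -1)"

text \<open>Psi_l[f_1,...,f_{l-1}] evaluated on homogeneous arguments as (0-indexed list of
  length l) with as ! k \<in> A_(ns ! k); the shifted degree is ns ! k - 1.\<close>
definition Psi :: "(nat \<Rightarrow> 'a::real_algebra_1 list \<Rightarrow> 'b::real_algebra_1) \<Rightarrow> nat \<Rightarrow> int list \<Rightarrow> 'a list \<Rightarrow> 'b" where
  "Psi f l ns as =
     (\<Sum>i=1..l-1. sgn_pow (\<Sum>k<i. ns ! k - 1) *\<^sub>R
         f (l - 1) (take (i - 1) as @ [as ! (i - 1) * as ! i] @ drop (i + 1) as))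
   - (\<Sum>i=1..l-1. sgn_pow (\<Sum>k<i. ns ! k - 1) *\<^sub>R (f i (take i as) * f (l - i) (drop i as)))"

end

theory Submission
  imports Defs
begin

lemma one_deg0:
  assumes "graded_vs G" "(1::'a::real_algebra_1) \<in> G 0" "1 \<in> G n"
  shows "n = 0"
proof (rule ccontr)
  assume nz: "n \<noteq> 0"
  have sub: "\<And>m. subspace (G m)" using assms(1) unfolding graded_vs_def by blast
  have z: "\<And>m. 0 \<in> G m" using sub subspace_0 by blast
  have U: "\<exists>!c. finite {m. c m \<noteq> 0} \<and> (\<forall>m. c m \<in> G m) \<and> (1::'a) = (\<Sum>m\<in>{m. c m \<noteq> 0}. c m)"
    using assms(1) unfolding graded_vs_def by blast
  define c1 where "c1 = (\<lambda>m::int. if m = 0 then (1::'a) else 0)"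
  define c2 where "c2 = (\<lambda>m::int. if m = n then (1::'a) else 0)"
  have s1: "{m. c1 m \<noteq> 0} = {0}" unfolding c1_def by auto
  have s2: "{m. c2 m \<noteq> 0} = {n}" unfolding c2_def by auto
  have P1: "finite {m. c1 m \<noteq> 0} \<and> (\<forall>m. c1 m \<in> G m) \<and> (1::'a) = (\<Sum>m\<in>{m. c1 m \<noteq> 0}. c1 m)"
    using s1 z assms(2) by (auto simp: c1_def)
  have P2: "finite {m. c2 m \<noteq> 0} \<and> (\<forall>m. c2 m \<in> G m) \<and> (1::'a) = (\<Sum>m\<in>{m. c2 m \<noteq> 0}. c2 m)"
    using s2 z assms(3) by (auto simp: c2_def)
  have "c1 = c2" using U P1 P2 by blast
  hence "c1 0 = c2 0" by simp
  thus False using nz by (simp add: c1_def c2_def)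
qed

lemma sgn_pow_minus1: "sgn_pow (x - 1) = - sgn_pow x"
  unfolding sgn_pow_def by auto

theorem proposition2:
  fixes G :: "int \<Rightarrow> 'a::real_algebra_1 set" and d :: "'a \<Rightarrow> 'a"
    and G' :: "int \<Rightarrow> 'b::real_algebra_1 set" and d' :: "'b \<Rightarrow> 'b"
    and f :: "nat \<Rightarrow> 'a list \<Rightarrow> 'b" and l :: nat
  assumes "unital_dg_algebra G d" and "unital_dg_algebra G' d'"
    and "l \<ge> 2"
    and "\<forall>i\<in>{1..l-1}. hom0_shift G G' i (f i)"
    and "f 1 [1] = 1"
    and "\<forall>i\<in>{2..l-1}. normal_map i (f i)"
  shows "\<forall>as ns. length as = l \<longrightarrow> length ns = l \<longrightarrow> (\<forall>k<l. as ! k \<in> G (ns ! k)) \<longrightarrow>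
           1 \<in> set as \<longrightarrow> Psi f l ns as = 0"
proof (intro allI impI)
  fix as :: "'a list" and ns :: "int list"
  assume la: "length as = l" and ln: "length ns = l" and hom: "\<forall>k<l. as ! k \<in> G (ns ! k)"
    and one: "1 \<in> set as"
  obtain p where pl: "p < l" and ap: "as ! p = 1" using one la by (metis in_set_conv_nth)
  have gv: "graded_vs G" and g10: "1 \<in> G 0" using assms(1) unfolding unital_dg_algebra_def by auto
  have np: "ns ! p = 0" using one_deg0[OF gv g10] hom pl ap by metis
  define s where "s = (\<lambda>i. sgn_pow (\<Sum>k<i. ns ! k - 1))"
  define M where "M = (\<lambda>i. take (i - 1) as @ [as ! (i - 1) * as ! i] @ drop (i + 1) as)"
  have nm: "\<And>i xs. i \<in> {2..l-1} \<Longrightarrow> length xs = i \<Longrightarrow> 1 \<in> set xs \<Longrightarrow> f i xs = 0"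
    using assms(6) unfolding normal_map_def by blast
  have Psi_eq: "Psi f l ns as = (\<Sum>i=1..l-1. s i *\<^sub>R f (l - 1) (M i))
      - (\<Sum>i=1..l-1. s i *\<^sub>R (f i (take i as) * f (l - i) (drop i as)))"
    unfolding Psi_def s_def M_def by simp
  have sp1: "s (p + 1) = - s p"
    unfolding s_def using np by (simp add: sgn_pow_minus1)
  have lenM: "\<And>i. i \<in> {1..l-1} \<Longrightarrow> length (M i) = l - 1"
    unfolding M_def using la by auto
  have Z1: "f (l - 1) (M i) = 0" if i: "i \<in> {1..l-1}" "i \<noteq> p" "i \<noteq> p + 1" for i
  proof -
    have l3: "l - 1 \<in> {2..l-1}" using i pl by auto
    have "1 \<in> set (M i)"
    proof (cases "p < i - 1")
      case True
      have "M i ! p = 1" unfolding M_def using True ap la i pl by (simp add: nth_append)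
      moreover have "p < length (M i)" using lenM[OF i(1)] True i by auto
      ultimately show ?thesis by (metis nth_mem)
    next
      case False
      hence pi: "p > i" using i by auto
      have "M i ! (p - 1) = 1" unfolding M_def using pi ap la i pl
        by (auto simp add: nth_append)
      moreover have "p - 1 < length (M i)" using lenM[OF i(1)] pi pl by auto
      ultimately show ?thesis by (metis nth_mem)
    qed
    thus ?thesis using nm[OF l3 lenM[OF i(1)]] by simp
  qed
  have Z2: "f i (take i as) * f (l - i) (drop i as) = 0"
    if i: "i \<in> {1..l-1}" "(p < i \<and> i \<ge> 2) \<or> (i \<le> p \<and> l - i \<ge> 2)" for i
  proof (cases "p < i")
    case True
    have "take i as ! p = 1" using True ap by simp
    hence "1 \<in> set (take i as)" using True la i by (metis length_take min_absorb2 atLeastAtMost_iff nth_mem le_diff_conv2 le_add1 le_trans one_le_numeral diff_le_self)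
    hence "f i (take i as) = 0" using nm[of i "take i as"] i True la by auto
    thus ?thesis by simp
  next
    case False
    have "drop i as ! (p - i) = 1" using False ap la pl by simp
    hence "1 \<in> set (drop i as)" using False la pl by (metis length_drop diff_less_mono not_less nth_mem)
    hence "f (l - i) (drop i as) = 0" using nm[of "l - i" "drop i as"] i False la by auto
    thus ?thesis by simp
  qed
  show "Psi f l ns as = 0"
  proof (cases "p = 0")
    case True
    have S1: "(\<Sum>i=1..l-1. s i *\<^sub>R f (l - 1) (M i)) = s 1 *\<^sub>R f (l - 1) (M 1)"
      by (subst sum.mono_neutral_right[where S="{1}"]) (use Z1 True assms(3) in auto)
    have S2: "(\<Sum>i=1..l-1. s i *\<^sub>R (f i (take i as) * f (l - i) (drop i as)))
        = s 1 *\<^sub>R (f 1 (take 1 as) * f (l - 1) (drop 1 as))"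
      by (subst sum.mono_neutral_right[where S="{1}"]) (use Z2 True assms(3) in auto)
    have M1: "M 1 = drop 1 as" unfolding M_def using True ap la assms(3)
      by (cases as; cases "tl as") auto
    have t1: "take 1 as = [1]" using True ap la assms(3) by (cases as) auto
    show ?thesis unfolding Psi_eq S1 S2 M1 t1 assms(5) by simp
  next
    case pnz: False
    show ?thesis
    proof (cases "p = l - 1")
      case True
      have S1: "(\<Sum>i=1..l-1. s i *\<^sub>R f (l - 1) (M i)) = s (l-1) *\<^sub>R f (l - 1) (M (l-1))"
        by (subst sum.mono_neutral_right[where S="{l-1}"]) (use Z1 True assms(3) in auto)
      have S2: "(\<Sum>i=1..l-1. s i *\<^sub>R (f i (take i as) * f (l - i) (drop i as)))
          = s (l-1) *\<^sub>R (f (l-1) (take (l-1) as) * f 1 (drop (l-1) as))"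
        by (subst sum.mono_neutral_right[where S="{l-1}"]) (use Z2 True assms(3) pnz in auto)
      have M1: "M (l-1) = take (l-1) as"
      proof -
        obtain m where lm: "l = Suc (Suc m)" using assms(3) by (metis add_2_eq_Suc le_Suc_ex)
        have "take (Suc m) as = take m as @ [as ! m]"
          using la lm by (simp add: take_Suc_conv_app_nth)
        thus ?thesis unfolding M_def using True ap la lm by simp
      qed
      have t1: "drop (l-1) as = [1]"
      proof -
        obtain m where lm: "l = Suc m" using assms(3) by (cases l) auto
        have "as ! m # drop (Suc m) as = drop m as" using la lm by (metis Cons_nth_drop_Suc lessI)
        moreover have "drop (Suc m) as = []" using la lm by simp
        ultimately show ?thesis using True ap lm by simp
      qed
      show ?thesis unfolding Psi_eq S1 S2 M1 t1 assms(5) by simp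
    next
      case False
      have pr: "p \<in> {1..l-1}" "p + 1 \<in> {1..l-1}" using pnz False pl by auto
      have S1: "(\<Sum>i=1..l-1. s i *\<^sub>R f (l - 1) (M i)) = (\<Sum>i\<in>{p, p+1}. s i *\<^sub>R f (l - 1) (M i))"
        by (rule sum.mono_neutral_right) (use Z1 pr in auto)
      have MM: "M p = M (p + 1)"
      proof -
        obtain q where pq: "p = Suc q" using pnz by (cases p) auto
        have "take p as = take (p - 1) as @ [as ! (p-1)]"
          using la pq pl by (simp add: take_Suc_conv_app_nth)
        moreover have "drop (p+1) as = as ! (p+1) # drop (p+2) as"
          using la pr by (simp add: Cons_nth_drop_Suc)
        ultimately show ?thesis unfolding M_def using ap pnz by simp
      qed
      have S2: "(\<Sum>i=1..l-1. s i *\<^sub>R (f i (take i as) * f (l - i) (drop i as))) = 0"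
      proof (rule sum.neutral, rule ballI)
        fix i assume i: "i \<in> {1..l-1}"
        have "(p < i \<and> i \<ge> 2) \<or> (i \<le> p \<and> l - i \<ge> 2)" using i pnz False pl by auto
        thus "s i *\<^sub>R (f i (take i as) * f (l - i) (drop i as)) = 0" using Z2[OF i] by simp
      qed
      show ?thesis unfolding Psi_eq S1 S2 using MM sp1 by simp
    qed
  qed
qed

end
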